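(* Let $X\subset\mathbb{R}$, $\delta>0$, and let $f,g:X\to\mathbb{R}^+$. Suppose the graph of $g$ intersects $N_\delta(g)$ boxes of the $\delta$-mesh, and that for every column $\mathbf{B}_i$ the graph of $f$ intersects at most $n_f$ boxes of $\mathbf{B}_i$. Then the graph of $f+g$ intersects at least $\frac{N_\delta(g)}{2n_f}$ boxes of the $\delta$-mesh.
   Context: The $\delta$-mesh consists of the disjoint boxes $B_i^j=[i\delta,(i+1)\delta)\times[j\delta,(j+1)\delta)$, $i,j\in\mathbb{Z}$; the $i$-th column is $\mathbf{B}_i=\bigcup_j B_i^j$. The graph of $h$ is $\{(x,h(x)):x\in X\}$, and $N_\delta(h)$ denotes the number of boxes of the $\delta$-mesh meeting the graph of $h$. *)

theory Defs
  imports Complex_Main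
begin

definition mesh_box :: "real \<Rightarrow> int \<Rightarrow> int \<Rightarrow> (real \<times> real) set" where
  "mesh_box \<delta> i j = {real_of_int i * \<delta> ..< (real_of_int i + 1) * \<delta>} \<times>
                      {real_of_int j * \<delta> ..< (real_of_int j + 1) * \<delta>}"

definition graph_on :: "real set \<Rightarrow> (real \<Rightarrow> real) \<Rightarrow> (real \<times> real) set" where
  "graph_on X h = {(x, h x) | x. x \<in> X}"

definition meeting_boxes :: "real \<Rightarrow> real set \<Rightarrow> (real \<Rightarrow> real) \<Rightarrow> (int \<times> int) set" where
  "meeting_boxes \<delta> X h = {(i, j). mesh_box \<delta> i j \<inter> graph_on X h \<noteq> {}}"

definition N_delta :: "real \<Rightarrow> real set \<Rightarrow> (real \<Rightarrow> real) \<Rightarrow> nat" where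
  "N_delta \<delta> X h = card (meeting_boxes \<delta> X h)"

definition column_meeting :: "real \<Rightarrow> real set \<Rightarrow> (real \<Rightarrow> real) \<Rightarrow> int \<Rightarrow> int set" where
  "column_meeting \<delta> X h i = {j. mesh_box \<delta> i j \<inter> graph_on X h \<noteq> {}}"

end

theory Submission
  imports Defs
begin

lemma mem_box:
  assumes "\<delta> > 0"
  shows "(x, y) \<in> mesh_box \<delta> i j \<longleftrightarrow> i = \<lfloor>x/\<delta>\<rfloor> \<and> j = \<lfloor>y/\<delta>\<rfloor>"
proof -
  have a: "\<And>t k. (real_of_int k * \<delta> \<le> t \<and> t < (real_of_int k + 1) * \<delta>) \<longleftrightarrow> k = \<lfloor>t/\<delta>\<rfloor>"
  proof -
    fix t k
    have "(real_of_int k * \<delta> \<le> t \<and> t < (real_of_int k + 1) * \<delta>) \<longleftrightarrow> (real_of_int k \<le> t/\<delta> \<and> t/\<delta> < real_of_int k + 1)"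
      using assms by (simp add: pos_le_divide_eq pos_divide_less_eq)
    also have "\<dots> \<longleftrightarrow> k = \<lfloor>t/\<delta>\<rfloor>" by (metis floor_eq_iff)
    finally show "?thesis t k" .
  qed
  show ?thesis unfolding mesh_box_def using a[of i x] a[of j y] by auto
qed

lemma mb_char:
  assumes "\<delta> > 0"
  shows "(i, j) \<in> meeting_boxes \<delta> X h \<longleftrightarrow> (\<exists>x\<in>X. i = \<lfloor>x/\<delta>\<rfloor> \<and> j = \<lfloor>h x/\<delta>\<rfloor>)"
  unfolding meeting_boxes_def graph_on_def using mem_box[OF assms] by blast

lemma cm_char:
  assumes "\<delta> > 0"
  shows "j \<in> column_meeting \<delta> X h i \<longleftrightarrow> (\<exists>x\<in>X. i = \<lfloor>x/\<delta>\<rfloor> \<and> j = \<lfloor>h x/\<delta>\<rfloor>)"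
  unfolding column_meeting_def graph_on_def using mem_box[OF assms] by blast

lemma floor_sum: "\<exists>e\<in>{0,1::int}. \<lfloor>a + b\<rfloor> = \<lfloor>a\<rfloor> + \<lfloor>b\<rfloor> + e"
  by (simp add: floor_add)

theorem lemma3:
  fixes X :: "real set" and \<delta> :: real and f g :: "real \<Rightarrow> real" and n_f :: nat
  assumes "\<delta> > 0"
    and "\<forall>x\<in>X. f x > 0" and "\<forall>x\<in>X. g x > 0"
    and "finite (meeting_boxes \<delta> X g)"
    and "\<forall>i. finite (column_meeting \<delta> X f i) \<and> card (column_meeting \<delta> X f i) \<le> n_f"
  shows "real (N_delta \<delta> X (\<lambda>x. f x + g x)) \<ge> real (N_delta \<delta> X g) / (2 * real n_f)"
proof -
  define G where "G = meeting_boxes \<delta> X g"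
  define S where "S = meeting_boxes \<delta> X (\<lambda>x. f x + g x)"
  define F where "F = column_meeting \<delta> X f"
  have dpos: "\<delta> > 0" by fact
  have key: "\<And>x. x \<in> X \<Longrightarrow> \<exists>e\<in>{0,1::int}. \<lfloor>(f x + g x)/\<delta>\<rfloor> = \<lfloor>f x/\<delta>\<rfloor> + \<lfloor>g x/\<delta>\<rfloor> + e"
    using floor_sum by (simp add: add_divide_distrib)
  have finF: "\<And>i. finite (F i)" and cF: "\<And>i. card (F i) \<le> n_f" using assms(5) F_def by auto
  define T where "T = (\<lambda>(i::int, m::int). (\<lambda>(k, e). (i, m - k - e)) ` (F i \<times> {0,1::int}))"
  define U where "U = (\<lambda>(i::int, j::int). (\<lambda>(k, e). (i, j + k + e)) ` (F i \<times> {0,1::int}))"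
  have GT: "G \<subseteq> (\<Union>p\<in>S. T p)"
  proof
    fix p assume "p \<in> G"
    then obtain i j where p: "p = (i,j)" and "(i,j) \<in> G" by (cases p) auto
    then obtain x where x: "x \<in> X" "i = \<lfloor>x/\<delta>\<rfloor>" "j = \<lfloor>g x/\<delta>\<rfloor>"
      using mb_char[OF dpos] G_def by blast
    obtain e where e: "e \<in> {0,1::int}" "\<lfloor>(f x + g x)/\<delta>\<rfloor> = \<lfloor>f x/\<delta>\<rfloor> + \<lfloor>g x/\<delta>\<rfloor> + e"
      using key[OF x(1)] by blast
    have s: "(i, \<lfloor>(f x + g x)/\<delta>\<rfloor>) \<in> S" using mb_char[OF dpos, of i _ X "\<lambda>x. f x + g x"] S_def x by blast
    have k: "\<lfloor>f x/\<delta>\<rfloor> \<in> F i" using cm_char[OF dpos] F_def x by blast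
    have "(i,j) \<in> T (i, \<lfloor>(f x + g x)/\<delta>\<rfloor>)"
      unfolding T_def using k e x
      by (auto intro!: image_eqI[where x="(\<lfloor>f x/\<delta>\<rfloor>, e)"])
    thus "p \<in> (\<Union>p\<in>S. T p)" using s p by blast
  qed
  have SU: "S \<subseteq> (\<Union>p\<in>G. U p)"
  proof
    fix p assume "p \<in> S"
    then obtain i j where p: "p = (i,j)" and "(i,j) \<in> S" by (cases p) auto
    then obtain x where x: "x \<in> X" "i = \<lfloor>x/\<delta>\<rfloor>" "j = \<lfloor>(f x + g x)/\<delta>\<rfloor>"
      using mb_char[OF dpos, of i j X "\<lambda>x. f x + g x"] S_def by blast
    obtain e where e: "e \<in> {0,1::int}" "\<lfloor>(f x + g x)/\<delta>\<rfloor> = \<lfloor>f x/\<delta>\<rfloor> + \<lfloor>g x/\<delta>\<rfloor> + e"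
      using key[OF x(1)] by blast
    have s: "(i, \<lfloor>g x/\<delta>\<rfloor>) \<in> G" using mb_char[OF dpos] G_def x by blast
    have k: "\<lfloor>f x/\<delta>\<rfloor> \<in> F i" using cm_char[OF dpos] F_def x by blast
    have "(i,j) \<in> U (i, \<lfloor>g x/\<delta>\<rfloor>)"
      unfolding U_def using k e x
      by (auto intro!: image_eqI[where x="(\<lfloor>f x/\<delta>\<rfloor>, e)"])
    thus "p \<in> (\<Union>p\<in>G. U p)" using s p by blast
  qed
  have finG: "finite G" using assms(4) G_def by simp
  have finU: "\<And>p. finite (U p)" unfolding U_def using finF by (auto split: prod.splits)
  have finT: "\<And>p. finite (T p)" unfolding T_def using finF by (auto split: prod.splits)
  have finS: "finite S" using SU finG finU by (meson finite_UN_I finite_subset)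
  have cT: "\<And>p. card (T p) \<le> 2 * n_f"
  proof -
    fix p :: "int \<times> int"
    obtain i m where p: "p = (i,m)" by (cases p)
    have "card (T p) \<le> card (F i \<times> {0,1::int})" unfolding T_def p
      using finF by (simp only: prod.case) (intro card_image_le, simp)
    also have "\<dots> = card (F i) * 2" by (simp add: card_cartesian_product)
    finally show "card (T p) \<le> 2 * n_f" using cF[of i] by linarith
  qed
  have "card G \<le> card (\<Union>p\<in>S. T p)"
    using GT finS finT by (intro card_mono) auto
  also have "\<dots> \<le> (\<Sum>p\<in>S. card (T p))" using finS by (rule card_UN_le)
  also have "\<dots> \<le> (\<Sum>p\<in>S. 2 * n_f)" by (rule sum_mono) (rule cT)
  also have "\<dots> = card S * (2 * n_f)" by simp
  finally have ineq: "real (card G) \<le> real (card S) * (2 * real n_f)" by (metis of_nat_le_iff of_nat_mult of_nat_numeral)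
  show ?thesis
  proof (cases "n_f = 0")
    case True then show ?thesis by simp
  next
    case False
    hence "2 * real n_f > 0" by simp
    thus ?thesis using ineq unfolding N_delta_def G_def[symmetric] S_def[symmetric]
      by (simp add: divide_le_eq)
  qed
qed

end
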